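(* Let $m\ge2$ and let $\mathcal{C}\in\mathbb{S}_{m,n}$ be a symmetric Cauchy tensor with generating vector $c=(c_1,\dots,c_n)^T$. The following are equivalent: (i) $\mathcal{C}$ is completely positive; (ii) $\mathcal{C}$ is strictly copositive; (iii) $c>0$ (all $c_i>0$); (iv) the function $f_{\mathcal{C}}(x)=\mathcal{C}x^m$ is strictly monotonically increasing on $\mathbb{R}^n_+$, i.e. $f_{\mathcal{C}}(x)>f_{\mathcal{C}}(y)$ whenever $x,y\in\mathbb{R}^n_+$, $x\ge y$ entrywise and $x\ne y$; (v) $\mathcal{C}$ is doubly nonnegative.
   Context: Given $c\in\mathbb{R}^n$ with $c_i\ne0$ for all $i$ and $c_{i_1}+\dots+c_{i_m}\ne0$ for all $i_1,\dots,i_m\in[n]$, the symmetric Cauchy tensor with generating vector $c$ is $\mathcal{C}=(c_{i_1\ldots i_m})$ with $c_{i_1\ldots i_m}=1/(c_{i_1}+\dots+c_{i_m})$. $\mathcal{A}x^m=\sum a_{i_1\ldots i_m}x_{i_1}\cdots x_{i_m}$; $(\mathcal{A}x^{m-1})_i=\sum_{i_2,\dots,i_m}a_{ii_2\ldots i_m}x_{i_2}\cdots x_{i_m}$; an H-eigenvalue is $\lambda\in\mathbb{R}$ with $\mathcal{A}x^{m-1}=\lambda(x_i^{m-1})_i$ for some nonzero real $x$. Completely positive: $\mathcal{A}=\sum_{k=1}^r(u^{(k)})^m$ with $u^{(k)}\in\mathbb{R}^n_+$, where $(u^m)_{i_1\ldots i_m}=u_{i_1}\cdots u_{i_m}$.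 Strictly copositive: $\mathcal{A}x^m>0$ for all $x\in\mathbb{R}^n_+\setminus\{0\}$. Doubly nonnegative: all entries and all H-eigenvalues nonnegative. *)

theory Defs
  imports Complex_Main
begin

text \<open>An m-th order n-dimensional real tensor is represented as a function on
index tuples, i.e. lists of length m with entries in {0..<n} (0-based indices).
Vectors in R^n are functions nat => real, only components i < n being relevant.\<close>

definition idx :: "nat \<Rightarrow> nat \<Rightarrow> nat list set" where
  "idx n m = {is. length is = m \<and> set is \<subseteq> {..<n}}"

definition tform :: "nat \<Rightarrow> nat \<Rightarrow> (nat list \<Rightarrow> real) \<Rightarrow> (nat \<Rightarrow> real) \<Rightarrow> real" where
  "tform n m A x = (\<Sum>is\<in>idx n m. A is * prod_list (map x is))"

definition tapply :: "nat \<Rightarrow> nat \<Rightarrow> (nat list \<Rightarrow> real) \<Rightarrow> (nat \<Rightarrow> real) \<Rightarrow> nat \<Rightarrow> real" where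
  "tapply n m A x i = (\<Sum>js\<in>idx n (m - 1). A (i # js) * prod_list (map x js))"

definition H_eigenvalue :: "nat \<Rightarrow> nat \<Rightarrow> (nat list \<Rightarrow> real) \<Rightarrow> real \<Rightarrow> bool" where
  "H_eigenvalue n m A lam \<longleftrightarrow>
     (\<exists>x. (\<forall>i. n \<le> i \<longrightarrow> x i = 0) \<and> (\<exists>i<n. x i \<noteq> 0) \<and>
          (\<forall>i<n. tapply n m A x i = lam * x i ^ (m - 1)))"

definition cauchy_gen_ok :: "nat \<Rightarrow> nat \<Rightarrow> (nat \<Rightarrow> real) \<Rightarrow> bool" where
  "cauchy_gen_ok n m c \<longleftrightarrow> (\<forall>i<n. c i \<noteq> 0) \<and> (\<forall>is\<in>idx n m. sum_list (map c is) \<noteq> 0)"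

definition cauchy_tensor :: "(nat \<Rightarrow> real) \<Rightarrow> nat list \<Rightarrow> real" where
  "cauchy_tensor c is = 1 / sum_list (map c is)"

definition completely_positive :: "nat \<Rightarrow> nat \<Rightarrow> (nat list \<Rightarrow> real) \<Rightarrow> bool" where
  "completely_positive n m A \<longleftrightarrow>
     (\<exists>(r::nat) (u::nat \<Rightarrow> nat \<Rightarrow> real).
        (\<forall>k<r. \<forall>i<n. u k i \<ge> 0) \<and>
        (\<forall>is\<in>idx n m. A is = (\<Sum>k<r. prod_list (map (u k) is))))"

definition nonneg_vec :: "nat \<Rightarrow> (nat \<Rightarrow> real) \<Rightarrow> bool" where
  "nonneg_vec n x \<longleftrightarrow> (\<forall>i<n. x i \<ge> 0)"

definition strictly_copositive :: "nat \<Rightarrow> nat \<Rightarrow> (nat list \<Rightarrow> real) \<Rightarrow> bool" where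
  "strictly_copositive n m A \<longleftrightarrow>
     (\<forall>x. nonneg_vec n x \<and> (\<exists>i<n. x i \<noteq> 0) \<longrightarrow> tform n m A x > 0)"

definition strictly_increasing_on_nonneg :: "nat \<Rightarrow> nat \<Rightarrow> (nat list \<Rightarrow> real) \<Rightarrow> bool" where
  "strictly_increasing_on_nonneg n m A \<longleftrightarrow>
     (\<forall>x y. nonneg_vec n x \<and> nonneg_vec n y \<and> (\<forall>i<n. y i \<le> x i) \<and> (\<exists>i<n. x i \<noteq> y i)
        \<longrightarrow> tform n m A x > tform n m A y)"

definition doubly_nonnegative :: "nat \<Rightarrow> nat \<Rightarrow> (nat list \<Rightarrow> real) \<Rightarrow> bool" where
  "doubly_nonnegative n m A \<longleftrightarrow>
     (\<forall>is\<in>idx n m. A is \<ge> 0) \<and> (\<forall>lam. H_eigenvalue n m A lam \<longrightarrow> lam \<ge> 0)"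

end

theory Submission
  imports Defs
begin


lemma lin_dep:
  fixes A :: "'e \<Rightarrow> 'k \<Rightarrow> real"
  assumes "finite E" shows "finite K \<Longrightarrow> card E < card K \<Longrightarrow>
    \<exists>l. (\<exists>k\<in>K. l k \<noteq> 0) \<and> (\<forall>e\<in>E. (\<Sum>k\<in>K. A e k * l k) = 0)"
  using assms
proof (induction E arbitrary: K A rule: finite_induct)
  case empty
  then obtain k0 where "k0 \<in> K" by fastforce
  thus ?case by (intro exI[of _ "\<lambda>k. 1"]) auto
next
  case (insert e E K A)
  show ?case
  proof (cases "\<forall>k\<in>K. A e k = 0")
    case True
    from insert.IH[of K A] insert.prems insert.hyps obtain l where
      "\<exists>k\<in>K. l k \<noteq> 0" "\<forall>e\<in>E. (\<Sum>k\<in>K. A e k * l k) = 0" by auto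
    thus ?thesis using True by auto
  next
    case False
    then obtain j where j: "j \<in> K" "A e j \<noteq> 0" by auto
    define K' where "K' = K - {j}"
    define A' where "A' e' k = A e' k - A e' j * A e k / A e j" for e' k
    have fK': "finite K'" using insert.prems by (simp add: K'_def)
    have cK': "card E < card K'" using insert.prems insert.hyps j by (simp add: K'_def)
    from insert.IH[OF fK' cK', of A'] obtain l where
      l: "\<exists>k\<in>K'. l k \<noteq> 0" "\<forall>e'\<in>E. (\<Sum>k\<in>K'. A' e' k * l k) = 0" by auto
    define L where "L k = (if k = j then - (\<Sum>k\<in>K'. A e k * l k) / A e j else l k)" for k
    have Ksplit: "(\<Sum>k\<in>K. f k) = f j + (\<Sum>k\<in>K'. f k)" for f :: "'k \<Rightarrow> real"
      using j insert.prems by (simp add: K'_def sum.remove)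
    have LK': "(\<Sum>k\<in>K'. g k * L k) = (\<Sum>k\<in>K'. g k * l k)" for g
      by (intro sum.cong) (auto simp: L_def K'_def)
    have 1: "\<exists>k\<in>K. L k \<noteq> 0" using l(1) by (auto simp: L_def K'_def)
    have 2: "(\<Sum>k\<in>K. A e k * L k) = 0"
      using j by (simp add: Ksplit LK') (simp add: L_def)
    have 3: "(\<Sum>k\<in>K. A e' k * L k) = 0" if "e' \<in> E" for e'
    proof -
      have "(\<Sum>k\<in>K. A e' k * L k) = A e' j * L j + (\<Sum>k\<in>K'. A e' k * l k)"
        by (simp add: Ksplit LK')
      also have "\<dots> = (\<Sum>k\<in>K'. A' e' k * l k)"
        using j by (simp add: L_def A'_def sum_subtractf sum_distrib_left algebra_simps sum_divide_distrib)
      finally show ?thesis using l(2) that by simp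
    qed
    show ?thesis using 1 2 3 by auto
  qed
qed

lemma caratheodory_fin:
  fixes g :: "'k \<Rightarrow> 'i \<Rightarrow> real"
  assumes "finite I"
  shows "finite K \<Longrightarrow> (\<forall>k\<in>K. a k \<ge> 0) \<Longrightarrow>
    \<exists>K' b. K' \<subseteq> K \<and> card K' \<le> card I \<and> (\<forall>k\<in>K'. b k \<ge> 0) \<and>
       (\<forall>i\<in>I. (\<Sum>k\<in>K. a k * g k i) = (\<Sum>k\<in>K'. b k * g k i))"
proof (induction "card K" arbitrary: K a rule: less_induct)
  case less
  show ?case
  proof (cases "card K \<le> card I")
    case True thus ?thesis using less.prems by blast
  next
    case False
    from lin_dep[OF assms less.prems(1), of "\<lambda>i k. g k i"] False obtain l0 where
      l0: "\<exists>k\<in>K. l0 k \<noteq> 0" "\<forall>i\<in>I. (\<Sum>k\<in>K. g k i * l0 k) = 0" by auto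
    obtain l where l: "\<exists>k\<in>K. l k > 0" "\<forall>i\<in>I. (\<Sum>k\<in>K. g k i * l k) = 0"
    proof (cases "\<exists>k\<in>K. l0 k > 0")
      case True thus ?thesis using that l0 by blast
    next
      case F: False
      have "\<exists>k\<in>K. (- l0 k) > 0" using F l0(1) by force
      moreover have "\<forall>i\<in>I. (\<Sum>k\<in>K. g k i * (- l0 k)) = 0"
        using l0(2) by (simp add: sum_negf)
      ultimately show ?thesis using that[of "\<lambda>k. - l0 k"] by blast
    qed
    define P where "P = {k\<in>K. l k > 0}"
    have fP: "finite P" "P \<noteq> {}" using less.prems l by (auto simp: P_def)
    define t where "t = Min ((\<lambda>k. a k / l k) ` P)"
    have "t \<in> (\<lambda>k. a k / l k) ` P" unfolding t_def using fP by (intro Min_in) auto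
    then obtain k0 where k0: "k0 \<in> P" "t = a k0 / l k0" by auto
    have tle: "t \<le> a k / l k" if "k \<in> P" for k using fP that by (auto simp: t_def)
    have t0: "t \<ge> 0" using k0 less.prems by (auto simp: P_def)
    define b where "b k = a k - t * l k" for k
    have b0: "b k \<ge> 0" if "k \<in> K" for k
    proof (cases "l k > 0")
      case True
      hence "t * l k \<le> a k" using tle[of k] that by (auto simp: P_def field_simps)
      thus ?thesis by (simp add: b_def)
    next
      case False
      hence "t * l k \<le> 0" using t0 by (simp add: mult_nonneg_nonpos)
      thus ?thesis using less.prems that by (auto simp: b_def)
    qed
    have bk0: "b k0 = 0" using k0 by (auto simp: b_def P_def)
    have k0K: "k0 \<in> K" using k0 by (auto simp: P_def)
    have sumb: "(\<Sum>k\<in>K. a k * g k i) = (\<Sum>k\<in>K - {k0}. b k * g k i)" if "i \<in> I" for i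
    proof -
      have "(\<Sum>k\<in>K. b k * g k i) = (\<Sum>k\<in>K. a k * g k i) - t * (\<Sum>k\<in>K. g k i * l k)"
        by (simp add: b_def algebra_simps sum_subtractf sum_distrib_left)
      also have "\<dots> = (\<Sum>k\<in>K. a k * g k i)" using l(2) that by simp
      finally have "(\<Sum>k\<in>K. a k * g k i) = (\<Sum>k\<in>K. b k * g k i)" by simp
      also have "\<dots> = (\<Sum>k\<in>K - {k0}. b k * g k i)"
        using k0K less.prems bk0 by (simp add: sum.remove)
      finally show ?thesis .
    qed
    have "card (K - {k0}) < card K" using k0K less.prems by (intro card_Diff1_less) auto
    from less.hyps[OF this, of b] less.prems b0 obtain K' b' where
      "K' \<subseteq> K - {k0}" "card K' \<le> card I" "\<forall>k\<in>K'. b' k \<ge> 0"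
      "\<forall>i\<in>I. (\<Sum>k\<in>K - {k0}. b k * g k i) = (\<Sum>k\<in>K'. b' k * g k i)" by auto
    thus ?thesis using sumb by (intro exI[of _ K'] exI[of _ b']) auto
  qed
qed

lemma lim_aux:
  fixes s :: real assumes s: "s > 0"
  shows "(\<lambda>M. (1/real (Suc M)) / (exp (s * (1/real (Suc M))) - 1)) \<longlonglongrightarrow> 1/s"
proof -
  have d: "((\<lambda>y. exp (s*y)) has_field_derivative s) (at 0)"
    by (auto intro!: derivative_eq_intros)
  hence L: "((\<lambda>y. (exp (s*y) - 1)/y) \<longlongrightarrow> s) (at 0)" by (simp add: has_field_derivative_iff)
  have t0: "(\<lambda>M. 1/real (Suc M)) \<longlonglongrightarrow> 0"
    using LIMSEQ_inverse_real_of_nat by (simp add: inverse_eq_divide)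
  have "filterlim (\<lambda>M. 1/real (Suc M)) (at 0) sequentially"
    unfolding filterlim_at using t0 by auto
  from filterlim_compose[OF L this]
  have "(\<lambda>M. (exp (s*(1/real (Suc M))) - 1)/(1/real (Suc M))) \<longlonglongrightarrow> s" by simp
  from tendsto_inverse[OF this] s
  show ?thesis by (simp add: inverse_eq_divide mult.commute)
qed

lemma lim_main:
  fixes s :: real assumes s: "s > 0"
  shows "(\<lambda>M. \<Sum>k\<in>{Suc 0..(Suc M)^2}. (1/real (Suc M)) * exp (- s * real k * (1/real (Suc M)))) \<longlonglongrightarrow> 1/s"
proof -
  define h where "h M = 1/real (Suc M)" for M
  define q where "q M = exp (- s * h M)" for M
  have eq: "(\<Sum>k\<in>{Suc 0..(Suc M)^2}. h M * exp (- s * real k * h M))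
        = h M / (exp (s * h M) - 1) * (1 - exp (- s * real (Suc M)))" for M
  proof -
    have hp: "h M > 0" by (simp add: h_def)
    have q1: "q M \<noteq> 1" "q M < 1" using hp s by (auto simp: q_def)
    have "(\<Sum>k\<in>{Suc 0..(Suc M)^2}. exp (- s * real k * h M)) = (\<Sum>k\<in>{Suc 0..(Suc M)^2}. q M ^ k)"
    proof (intro sum.cong refl)
      fix k assume "k \<in> {Suc 0..(Suc M)^2}"
      have "q M ^ k = exp (real k * (- s * h M))" unfolding q_def by (rule exp_of_nat_mult[symmetric])
      moreover have "real k * (- s * h M) = - s * real k * h M" by (simp add: algebra_simps)
      ultimately show "exp (- s * real k * h M) = q M ^ k" by simp
    qed
    also have "\<dots> = (\<Sum>k<(Suc M)^2. q M ^ Suc k)"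
      by (rule sum.atLeast1_atMost_eq)
    also have "\<dots> = q M * ((q M ^ (Suc M)^2 - 1)/(q M - 1))"
      by (simp add: sum_distrib_left[symmetric] geometric_sum q1)
    also have "q M ^ (Suc M)^2 = exp (- s * real (Suc M))"
    proof -
      have "q M ^ (Suc M)^2 = exp (real ((Suc M)^2) * (- s * h M))" unfolding q_def by (rule exp_of_nat_mult[symmetric])
      moreover have "real ((Suc M)^2) * (- s * h M) = - s * real (Suc M)"
      proof -
        have gen: "\<And>x::real. x > 0 \<Longrightarrow> x*x*(-s*(1/x)) = -s*x" by (simp add: field_simps)
        have "real (Suc M) > 0" by simp
        from gen[OF this] show ?thesis by (simp only: h_def of_nat_power power2_eq_square of_nat_mult)
      qed
      ultimately show ?thesis by simp
    qed
    also have "q M * ((exp (- s * real (Suc M)) - 1)/(q M - 1)) = 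
               (1 - exp (- s * real (Suc M))) / (exp (s * h M) - 1)"
      using q1 by (simp add: q_def field_simps exp_minus)
    finally show ?thesis by (simp add: sum_distrib_left[symmetric])
  qed
  have e0: "(\<lambda>M. exp (- s * real (Suc M))) \<longlonglongrightarrow> 0"
  proof -
    have fs: "filterlim (\<lambda>M. real (Suc M)) at_top sequentially"
      by (rule filterlim_compose[OF filterlim_real_sequentially filterlim_Suc])
    have "filterlim (\<lambda>M. s * real (Suc M)) at_top sequentially"
      by (rule filterlim_tendsto_pos_mult_at_top[OF tendsto_const s fs])
    hence "filterlim (\<lambda>M. - (s * real (Suc M))) at_bot sequentially"
      by (simp add: filterlim_uminus_at_top)
    from filterlim_compose[OF exp_at_bot this] show ?thesis by simp
  qed
  have l1: "(\<lambda>M. h M / (exp (s * h M) - 1)) \<longlonglongrightarrow> 1/s"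
    unfolding h_def by (rule lim_aux[OF s])
  have lim2: "(\<lambda>M. h M / (exp (s * h M) - 1) * (1 - exp (- s * real (Suc M)))) \<longlonglongrightarrow> 1/s * (1 - 0)"
    by (rule tendsto_mult[OF l1 tendsto_diff[OF tendsto_const e0]])
  have "(\<lambda>M. \<Sum>k\<in>{Suc 0..(Suc M)^2}. h M * exp (- s * real k * h M)) \<longlonglongrightarrow> 1/s"
    unfolding eq using lim2 by simp
  thus ?thesis unfolding h_def .
qed


lemma finite_idx: "finite (idx n m)"
proof -
  have "idx n m = {xs. set xs \<subseteq> {..<n} \<and> length xs = m}" by (auto simp: idx_def)
  thus ?thesis using finite_lists_length_eq[of "{..<n}" m] by simp
qed

lemma rep_idx: "i < n \<Longrightarrow> replicate m i \<in> idx n m" by (auto simp: idx_def)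

lemma idx_len: "is \<in> idx n m \<Longrightarrow> length is = m" by (simp add: idx_def)

lemma cauchy_rep: "cauchy_tensor c (replicate m i) = 1 / (real m * c i)"
  by (simp add: cauchy_tensor_def sum_list_replicate)

lemma prod_list_unit:
  "prod_list (map (\<lambda>j. if j = i then 1 else 0::real) is) = (if is = replicate (length is) i then 1 else 0)"
  by (induction "is") auto

lemma tform_unit:
  assumes "i < n" shows "tform n m A (\<lambda>j. if j = i then 1 else 0) = A (replicate m i)"
proof -
  have "tform n m A (\<lambda>j. if j = i then 1 else 0) = (\<Sum>is\<in>idx n m. if is = replicate m i then A is else 0)"
    unfolding tform_def by (intro sum.cong refl) (auto simp: prod_list_unit idx_def)
  also have "\<dots> = A (replicate m i)" using finite_idx rep_idx[OF assms] by (simp add: sum.delta')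
  finally show ?thesis .
qed

lemma tform_zero: "m \<ge> 1 \<Longrightarrow> tform n m A (\<lambda>_. 0) = 0"
  unfolding tform_def by (intro sum.neutral) (auto simp: idx_def neq_Nil_conv Suc_le_length_iff)

lemma pos_of_diag:
  assumes "cauchy_gen_ok n m c" "i < n" "m \<ge> 1" "cauchy_tensor c (replicate m i) \<ge> 0"
  shows "c i > 0"
proof -
  have "c i \<noteq> 0" using assms(1,2) by (simp add: cauchy_gen_ok_def)
  moreover have "real m * c i \<ge> 0" using assms(4) by (simp add: cauchy_rep zero_le_divide_1_iff)
  hence "c i \<ge> 0" using assms(3) by (simp add: zero_le_mult_iff)
  ultimately show ?thesis by simp
qed

lemma unit_nonneg: "nonneg_vec n (\<lambda>j. if j = i then 1 else 0::real)" by (simp add: nonneg_vec_def)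

lemma sc_pos:
  assumes "cauchy_gen_ok n m c" "m \<ge> 1" "strictly_copositive n m (cauchy_tensor c)"
  shows "\<forall>i<n. c i > 0"
proof (intro allI impI)
  fix i assume i: "i < n"
  have "tform n m (cauchy_tensor c) (\<lambda>j. if j = i then 1 else 0) > 0"
    using assms(3) i unit_nonneg[of n i] unfolding strictly_copositive_def by force
  hence "cauchy_tensor c (replicate m i) \<ge> 0" using tform_unit[OF i] by simp
  thus "c i > 0" using pos_of_diag assms i by blast
qed

lemma si_pos:
  assumes "cauchy_gen_ok n m c" "m \<ge> 1" "strictly_increasing_on_nonneg n m (cauchy_tensor c)"
  shows "\<forall>i<n. c i > 0"
proof (intro allI impI)
  fix i assume i: "i < n"
  have "tform n m (cauchy_tensor c) (\<lambda>j. if j = i then 1 else 0) > tform n m (cauchy_tensor c) (\<lambda>_. 0)"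
    using assms(3) i unit_nonneg[of n i] unfolding strictly_increasing_on_nonneg_def
    by (elim allE[of _ "\<lambda>j. if j = i then 1 else 0"] allE[of _ "\<lambda>_. 0"]) (auto simp: nonneg_vec_def)
  hence "cauchy_tensor c (replicate m i) \<ge> 0" using tform_unit[OF i] tform_zero[OF assms(2)] by simp
  thus "c i > 0" using pos_of_diag assms i by blast
qed

lemma dnn_pos:
  assumes "cauchy_gen_ok n m c" "m \<ge> 1" "doubly_nonnegative n m (cauchy_tensor c)"
  shows "\<forall>i<n. c i > 0"
  using assms pos_of_diag rep_idx unfolding doubly_nonnegative_def by blast

lemma sum_list_pos: "\<forall>x\<in>set xs. f x > (0::real) \<Longrightarrow> xs \<noteq> [] \<Longrightarrow> sum_list (map f xs) > 0"
proof (induction xs)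
  case (Cons a xs) thus ?case
    by (cases "xs = []") (auto intro!: add_pos_pos)
qed simp

lemma entry_pos:
  assumes "\<forall>i<n. c i > 0" "m \<ge> 1" "is \<in> idx n m"
  shows "cauchy_tensor c is > 0"
proof -
  have "is \<noteq> []" using assms(2,3) by (auto simp: idx_def)
  moreover have "\<forall>x\<in>set is. c x > 0" using assms(1,3) by (auto simp: idx_def)
  ultimately show ?thesis by (simp add: cauchy_tensor_def sum_list_pos)
qed

lemma prod_list_nonneg': "\<forall>j\<in>set xs. x j \<ge> (0::real) \<Longrightarrow> prod_list (map x xs) \<ge> 0"
  by (induction xs) auto

lemma prod_list_mono':
  "\<forall>j\<in>set xs. 0 \<le> y j \<and> y j \<le> (x j::real) \<Longrightarrow> prod_list (map y xs) \<le> prod_list (map x xs)"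
proof (induction xs)
  case (Cons a xs)
  thus ?case by (auto intro!: mult_mono prod_list_nonneg')
qed simp

lemma pos_sc:
  assumes "\<forall>i<n. c i > 0" "m \<ge> 1"
  shows "strictly_copositive n m (cauchy_tensor c)"
  unfolding strictly_copositive_def
proof (intro allI impI)
  fix x assume x: "nonneg_vec n x \<and> (\<exists>i<n. x i \<noteq> 0)"
  then obtain i where i: "i < n" "x i \<noteq> 0" by auto
  have xi: "x i > 0" using x i by (force simp: nonneg_vec_def)
  show "tform n m (cauchy_tensor c) x > 0" unfolding tform_def
  proof (rule sum_pos2[OF finite_idx rep_idx[OF i(1)]])
    show "0 < cauchy_tensor c (replicate m i) * prod_list (map x (replicate m i))"
      using entry_pos[OF assms rep_idx[OF i(1)]] xi by (simp add: prod_list_replicate)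
    show "\<And>is. is \<in> idx n m \<Longrightarrow> 0 \<le> cauchy_tensor c is * prod_list (map x is)"
      using entry_pos[OF assms, THEN less_imp_le] x by (auto intro!: mult_nonneg_nonneg prod_list_nonneg'
          simp: nonneg_vec_def idx_def)
  qed
qed

lemma pos_si:
  assumes "\<forall>i<n. c i > 0" "m \<ge> 1"
  shows "strictly_increasing_on_nonneg n m (cauchy_tensor c)"
  unfolding strictly_increasing_on_nonneg_def
proof (intro allI impI)
  fix x y assume H: "nonneg_vec n x \<and> nonneg_vec n y \<and> (\<forall>i<n. y i \<le> x i) \<and> (\<exists>i<n. x i \<noteq> y i)"
  then obtain i where i: "i < n" "x i \<noteq> y i" by auto
  have yi: "0 \<le> y i" "y i < x i" using H i by (force simp: nonneg_vec_def)+
  show "tform n m (cauchy_tensor c) x > tform n m (cauchy_tensor c) y" unfolding tform_def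
  proof (rule sum_strict_mono_ex1[OF finite_idx])
    show "\<forall>is\<in>idx n m. cauchy_tensor c is * prod_list (map y is) \<le> cauchy_tensor c is * prod_list (map x is)"
      using entry_pos[OF assms, THEN less_imp_le] H by (auto intro!: mult_left_mono prod_list_mono'
          simp: nonneg_vec_def idx_def)
    have "y i ^ m < x i ^ m" using yi assms(2) by (intro power_strict_mono) auto
    thus "\<exists>is\<in>idx n m. cauchy_tensor c is * prod_list (map y is) < cauchy_tensor c is * prod_list (map x is)"
      using entry_pos[OF assms rep_idx[OF i(1)]] rep_idx[OF i(1)]
      by (intro bexI[of _ "replicate m i"]) (auto simp: prod_list_replicate)
  qed
qed

lemma cp_pos:
  assumes "cauchy_gen_ok n m c" "m \<ge> 1" "completely_positive n m (cauchy_tensor c)"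
  shows "\<forall>i<n. c i > 0"
proof (intro allI impI)
  fix i assume i: "i < n"
  from assms(3) obtain r u where ru: "(\<forall>k<(r::nat). \<forall>i<n. u k i \<ge> (0::real)) \<and>
    (\<forall>is\<in>idx n m. cauchy_tensor c is = (\<Sum>k<r. prod_list (map (u k) is)))"
    unfolding completely_positive_def by blast
  hence u: "\<forall>k<r. \<forall>i<n. u k i \<ge> (0::real)"
    "\<forall>is\<in>idx n m. cauchy_tensor c is = (\<Sum>k<r. prod_list (map (u k) is))" by auto
  have "cauchy_tensor c (replicate m i) = (\<Sum>k<r. u k i ^ m)"
    using u(2) rep_idx[OF i] by (simp add: prod_list_replicate)
  also have "\<dots> \<ge> 0" using u(1) i by (intro sum_nonneg) auto
  finally show "c i > 0" using pos_of_diag assms i by blast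
qed

lemma prod_list_map_mult: "prod_list (map f xs) * prod_list (map g xs) = prod_list (map (\<lambda>j. f j * g j) xs :: real list)"
  by (induction xs) (auto simp: algebra_simps)

lemma idx_Suc: "idx n (Suc d) = (\<lambda>(j, js). j # js) ` ({..<n} \<times> idx n d)"
  by (auto simp: idx_def image_iff length_Suc_conv)

lemma sum_idx_prod: "(\<Sum>js\<in>idx n d. prod_list (map f js)) = (\<Sum>j<n. f j :: real) ^ d"
proof (induction d)
  case 0
  have "idx n 0 = {[]}" by (auto simp: idx_def)
  thus ?case by simp
next
  case (Suc d)
  have inj: "inj_on (\<lambda>(j, js). j # js) ({..<n} \<times> idx n d)" by (auto simp: inj_on_def)
  have "(\<Sum>js\<in>idx n (Suc d). prod_list (map f js)) = (\<Sum>(j,js)\<in>{..<n} \<times> idx n d. f j * prod_list (map f js))"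
    unfolding idx_Suc by (subst sum.reindex[OF inj]) (simp add: case_prod_beta)
  also have "\<dots> = (\<Sum>j<n. f j * (\<Sum>js\<in>idx n d. prod_list (map f js)))"
    by (simp add: sum.cartesian_product[symmetric] sum_distrib_left)
  also have "\<dots> = (\<Sum>j<n. f j) ^ Suc d" using Suc by (simp add: sum_distrib_right)
  finally show ?case .
qed

lemma cp_tapply:
  assumes u: "\<forall>is\<in>idx n m. A is = (\<Sum>k<r. prod_list (map (u k) is))" and m: "m \<ge> 1" and i: "i < n"
  shows "tapply n m A x i = (\<Sum>k<r. u k i * (\<Sum>j<n. u k j * x j) ^ (m - 1))"
proof -
  have "tapply n m A x i = (\<Sum>js\<in>idx n (m-1). (\<Sum>k<r. u k i * prod_list (map (\<lambda>j. u k j * x j) js)))"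
    unfolding tapply_def
  proof (intro sum.cong refl)
    fix js assume js: "js \<in> idx n (m-1)"
    hence "i # js \<in> idx n m" using i m by (auto simp: idx_def)
    hence "A (i # js) = (\<Sum>k<r. u k i * prod_list (map (u k) js))" using u by simp
    thus "A (i # js) * prod_list (map x js) = (\<Sum>k<r. u k i * prod_list (map (\<lambda>j. u k j * x j) js))"
      by (simp add: sum_distrib_right mult.assoc prod_list_map_mult)
  qed
  also have "\<dots> = (\<Sum>k<r. u k i * (\<Sum>js\<in>idx n (m-1). prod_list (map (\<lambda>j. u k j * x j) js)))"
    by (subst sum.swap) (simp add: sum_distrib_left)
  also have "\<dots> = (\<Sum>k<r. u k i * (\<Sum>j<n. u k j * x j) ^ (m - 1))" by (simp add: sum_idx_prod)
  finally show ?thesis .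
qed

lemma cp_heig:
  assumes cp: "completely_positive n m A" and m: "m \<ge> 1" and H: "H_eigenvalue n m A lam"
  shows "lam \<ge> 0"
proof -
  from cp obtain r u where ru: "(\<forall>k<(r::nat). \<forall>i<n. u k i \<ge> (0::real)) \<and>
    (\<forall>is\<in>idx n m. A is = (\<Sum>k<r. prod_list (map (u k) is)))"
    unfolding completely_positive_def by blast
  hence u0: "\<forall>k<r. \<forall>i<n. u k i \<ge> (0::real)"
    and u: "\<forall>is\<in>idx n m. A is = (\<Sum>k<r. prod_list (map (u k) is))" by auto
  from H obtain x i0 where i0: "i0 < n" "x i0 \<noteq> 0" and ev: "\<forall>i<n. tapply n m A x i = lam * x i ^ (m - 1)"
    unfolding H_eigenvalue_def by blast
  define p where "p k = (\<Sum>j<n. u k j * x j)" for k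
  have ta: "tapply n m A x i = (\<Sum>k<r. u k i * p k ^ (m - 1))" if "i < n" for i
    using cp_tapply[OF u m that] by (simp add: p_def)
  show ?thesis
  proof (cases "even (m - 1)")
    case True
    have "tapply n m A x i0 \<ge> 0" using ta[OF i0(1)] u0 i0(1) True
      by (auto intro!: sum_nonneg mult_nonneg_nonneg simp: zero_le_even_power)
    hence "lam * x i0 ^ (m - 1) \<ge> 0" using ev i0 by simp
    moreover have "x i0 ^ (m - 1) > 0" using True i0(2) by (simp add: zero_less_power_eq)
    ultimately show ?thesis by (simp add: zero_le_mult_iff)
  next
    case False
    hence em: "even m" using m by (cases m) auto
    have mm: "Suc (m - 1) = m" using m by simp
    have "(\<Sum>i<n. x i * tapply n m A x i) = (\<Sum>i<n. \<Sum>k<r. x i * u k i * p k ^ (m - 1))"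
      by (intro sum.cong refl) (simp add: ta sum_distrib_left mult.assoc)
    also have "\<dots> = (\<Sum>k<r. \<Sum>i<n. x i * u k i * p k ^ (m - 1))" by (rule sum.swap)
    also have "\<dots> = (\<Sum>k<r. p k ^ m)"
    proof (intro sum.cong refl)
      fix k
      have "(\<Sum>i<n. x i * u k i * p k ^ (m - 1)) = (\<Sum>i<n. u k i * x i) * p k ^ (m - 1)"
        unfolding sum_distrib_right by (intro sum.cong refl) (simp add: mult_ac)
      also have "(\<Sum>i<n. u k i * x i) = p k" by (simp add: p_def)
      also have "p k * p k ^ (m - 1) = p k ^ m" by (metis power_Suc mm)
      finally show "(\<Sum>i<n. x i * u k i * p k ^ (m - 1)) = p k ^ m" .
    qed
    finally have "(\<Sum>i<n. x i * tapply n m A x i) \<ge> 0"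
      using em by (auto intro!: sum_nonneg simp: zero_le_even_power)
    moreover have "(\<Sum>i<n. x i * tapply n m A x i) = lam * (\<Sum>i<n. x i ^ m)"
    proof -
      have "x i * tapply n m A x i = lam * x i ^ m" if "i < n" for i
      proof -
        have "x i * tapply n m A x i = lam * (x i * x i ^ (m - 1))" using ev that by simp
        also have "x i * x i ^ (m - 1) = x i ^ m" by (metis power_Suc mm)
        finally show ?thesis .
      qed
      thus ?thesis by (simp add: sum_distrib_left)
    qed
    moreover have "(\<Sum>i<n. x i ^ m) > 0"
      using em i0 by (intro sum_pos2[of _ i0]) (auto simp: zero_le_even_power zero_less_power_eq)
    ultimately show ?thesis by (simp add: zero_le_mult_iff)
  qed
qed


lemma caratheodory_idx:
  fixes g :: "'k \<Rightarrow> 'i \<Rightarrow> real"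
  assumes "finite I" "finite K" "K \<noteq> {}" "\<forall>k\<in>K. a k \<ge> 0"
  shows "\<exists>b y. (\<forall>l<card I. b l \<ge> 0 \<and> y l \<in> K) \<and>
       (\<forall>i\<in>I. (\<Sum>k\<in>K. a k * g k i) = (\<Sum>l<card I. b l * g (y l) i))"
proof -
  from caratheodory_fin[OF assms(1,2,4), of g] obtain K' b where
    K': "K' \<subseteq> K" "card K' \<le> card I" "\<forall>k\<in>K'. b k \<ge> 0"
       "\<forall>i\<in>I. (\<Sum>k\<in>K. a k * g k i) = (\<Sum>k\<in>K'. b k * g k i)" by blast
  have fK': "finite K'" using K'(1) assms(2) finite_subset by blast
  obtain h where h: "bij_betw h {0..<card K'} K'" using ex_bij_betw_nat_finite[OF fK'] by blast
  obtain k0 where k0: "k0 \<in> K" using assms(3) by blast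
  define b' where "b' l = (if l < card K' then b (h l) else 0)" for l
  define y where "y l = (if l < card K' then h l else k0)" for l
  have 1: "\<forall>l<card I. b' l \<ge> 0 \<and> y l \<in> K"
    using h K'(1,3) k0 by (auto simp: b'_def y_def bij_betw_def)
  have 2: "(\<Sum>k\<in>K'. b k * g k i) = (\<Sum>l<card I. b' l * g (y l) i)" for i
  proof -
    have "(\<Sum>k\<in>K'. b k * g k i) = (\<Sum>l\<in>{0..<card K'}. b (h l) * g (h l) i)"
      using sum.reindex_bij_betw[OF h, of "\<lambda>k. b k * g k i"] by simp
    also have "\<dots> = (\<Sum>l\<in>{0..<card K'}. b' l * g (y l) i)"
      by (intro sum.cong) (auto simp: b'_def y_def)
    also have "\<dots> = (\<Sum>l<card I. b' l * g (y l) i)"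
      using K'(2) by (intro sum.mono_neutral_left) (auto simp: b'_def)
    finally show ?thesis .
  qed
  show ?thesis using 1 2 K'(4) by (intro exI[of _ b'] exI[of _ y]) auto
qed

lemma subseq_all:
  fixes f :: "nat \<Rightarrow> nat \<Rightarrow> real"
  shows "\<forall>l<L. Bseq (\<lambda>M. f M l) \<Longrightarrow> \<exists>r. strict_mono r \<and> (\<forall>l<L. convergent (\<lambda>M. f (r M) l))"
proof (induction L)
  case 0 thus ?case by (intro exI[of _ id]) (auto simp: strict_mono_def)
next
  case (Suc L)
  then obtain r where r: "strict_mono r" "\<forall>l<L. convergent (\<lambda>M. f (r M) l)" by auto
  have B: "Bseq (\<lambda>M. f (r M) L)"
  proof -
    from Suc.prems obtain K where "K > 0" "\<forall>M. norm (f M L) \<le> K" unfolding Bseq_def by auto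
    thus ?thesis unfolding Bseq_def by auto
  qed
  obtain r' where r': "strict_mono r'" "monoseq (\<lambda>M. f (r (r' M)) L)"
    using seq_monosub[of "\<lambda>M. f (r M) L"] by blast
  have "Bseq (\<lambda>M. f (r (r' M)) L)"
    using B unfolding Bseq_def by auto
  hence cL: "convergent (\<lambda>M. f (r (r' M)) L)" using r'(2) Bseq_monoseq_convergent by blast
  have "convergent (\<lambda>M. f (r (r' M)) l)" if "l < L" for l
    using convergent_subseq_convergent[OF r(2)[rule_format, OF that] r'(1)] by (simp add: o_def)
  hence "\<forall>l<Suc L. convergent (\<lambda>M. f ((r \<circ> r') M) l)" using cL by (auto simp: less_Suc_eq)
  moreover have "strict_mono (r \<circ> r')" using r r' by (simp add: strict_mono_def)
  ultimately show ?case by blast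
qed

definition F :: "real \<Rightarrow> real \<Rightarrow> real" where
  "F z e = (if e = 0 then 1 else z powr e)"

lemma F_nonneg: "F z e \<ge> 0" by (simp add: F_def)

lemma F_add: "0 \<le> e1 \<Longrightarrow> 0 \<le> e2 \<Longrightarrow> F z (e1 + e2) = F z e1 * F z e2"
  by (auto simp: F_def powr_add)

lemma F_prod: "\<forall>x\<in>set xs. 0 \<le> g x \<Longrightarrow> prod_list (map (\<lambda>x. F z (g x)) xs) = F z (sum_list (map g xs))"
proof (induction xs)
  case Nil thus ?case by (simp add: F_def)
next
  case (Cons a xs)
  have "0 \<le> sum_list (map g xs)" using Cons.prems by (intro sum_list_nonneg) auto
  thus ?case using Cons by (simp add: F_add)
qed

lemma F_cont:
  assumes "zs \<longlonglongrightarrow> z" "\<forall>M. 0 \<le> zs M" "e \<ge> 0"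
  shows "(\<lambda>M. F (zs M) e) \<longlonglongrightarrow> F z e"
proof (cases "e = 0")
  case True thus ?thesis by (simp add: F_def)
next
  case False
  hence e: "e > 0" using assms(3) by simp
  show ?thesis
  proof (cases "z = 0")
    case True
    have "(\<lambda>M. zs M powr e) \<longlonglongrightarrow> 0"
      using assms(1,2) e True by (intro tendsto_zero_powrI[of _ _ "\<lambda>_. e" e]) auto
    thus ?thesis using False True by (simp add: F_def)
  next
    case z: False
    have "(\<lambda>M. zs M powr e) \<longlonglongrightarrow> z powr e" using assms(1) z by (intro tendsto_powr) auto
    thus ?thesis using False by (simp add: F_def)
  qed
qed

lemma prod_scale: "prod_list (map (\<lambda>i. a * f i) xs) = a ^ length xs * prod_list (map f xs :: real list)"
  by (induction xs) auto

lemma pos_cp: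
  assumes pos: "\<forall>i<n. c i > 0" and n: "n \<ge> 1" and m: "m \<ge> 1"
  shows "completely_positive n m (cauchy_tensor c)"
proof -
  define I where "I = idx n m"
  define N where "N = card I"
  have fI: "finite I" using finite_idx by (simp add: I_def)
  define cmin where "cmin = Min (c ` {..<n})"
  have ne: "c ` {..<n} \<noteq> {}" using n by (auto simp: lessThan_empty_iff)
  have "cmin \<in> c ` {..<n}" unfolding cmin_def by (rule Min_in[OF finite_imageI[OF finite_lessThan] ne])
  then obtain imin where imin: "imin < n" "c imin = cmin" by auto
  have cmin_le: "cmin \<le> c i" if "i < n" for i using that by (auto simp: cmin_def)
  have cmin_pos: "cmin > 0" using pos imin by auto
  define S where "S is = sum_list (map c is)" for "is"
  define s0 where "s0 = real m * cmin"
  have s0pos: "s0 > 0" using m cmin_pos by (simp add: s0_def)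
  have Sdiff: "S is - s0 = sum_list (map (\<lambda>i. c i - cmin) is)" if "is \<in> I" for "is"
    using that by (simp add: S_def s0_def sum_list_subtractf sum_list_triv I_def idx_def)
  have Sge: "S is - s0 \<ge> 0" if "is \<in> I" for "is"
    using that cmin_le by (simp add: Sdiff) (intro sum_list_nonneg, auto simp: I_def idx_def)
  have Spos: "S is > 0" if "is \<in> I" for "is" using Sge[OF that] s0pos by simp
  define is0 where "is0 = replicate m imin"
  have is0I: "is0 \<in> I" using imin by (simp add: I_def is0_def rep_idx)
  have S0: "S is0 = s0" using imin by (simp add: S_def is0_def s0_def sum_list_replicate)
  define T where "T z is = F z (S is - s0)" for z "is"
  define h where "h M = 1 / real (Suc M)" for M
  define KK where "KK M = {Suc 0..(Suc M)^2}" for M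
  define a where "a M k = h M * exp (- s0 * real k * h M)" for M k
  define g where "g M k is = T (exp (- real k * h M)) is" for M k "is"
  have ag: "a M k * g M k is = h M * exp (- S is * real k * h M)" if "is \<in> I" for M k "is"
  proof (cases "S is - s0 = 0")
    case True thus ?thesis by (simp add: a_def g_def T_def F_def)
  next
    case False
    have "g M k is = exp ((S is - s0) * (- real k * h M))"
      using False by (simp add: g_def T_def F_def powr_def)
    hence "a M k * g M k is = h M * (exp (- s0 * real k * h M) * exp ((S is - s0) * (- real k * h M)))"
      by (simp add: a_def)
    also have "\<dots> = h M * exp (- S is * real k * h M)" by (simp add: exp_add[symmetric] algebra_simps)
    finally show ?thesis .
  qed
  have conv: "(\<lambda>M. \<Sum>k\<in>KK M. a M k * g M k is) \<longlonglongrightarrow> 1 / S is" if "is \<in> I" for "is"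
    using lim_main[OF Spos[OF that]] by (simp add: ag[OF that] KK_def h_def)
  have "\<forall>M. \<exists>b y. (\<forall>l<N. b l \<ge> 0 \<and> y l \<in> KK M) \<and>
       (\<forall>is\<in>I. (\<Sum>k\<in>KK M. a M k * g M k is) = (\<Sum>l<N. b l * g M (y l) is))"
  proof
    fix M
    have ne: "KK M \<noteq> {}" by (simp add: KK_def)
    have a0: "\<forall>k\<in>KK M. a M k \<ge> 0" by (simp add: a_def h_def)
    have fK: "finite (KK M)" by (simp add: KK_def)
    from caratheodory_idx[OF fI fK ne a0, of "g M"] show "\<exists>b y. (\<forall>l<N. b l \<ge> 0 \<and> y l \<in> KK M) \<and>
       (\<forall>is\<in>I. (\<Sum>k\<in>KK M. a M k * g M k is) = (\<Sum>l<N. b l * g M (y l) is))"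
      unfolding N_def .
  qed
  hence "\<exists>B. \<forall>M. \<exists>y. (\<forall>l<N. B M l \<ge> 0 \<and> y l \<in> KK M) \<and>
       (\<forall>is\<in>I. (\<Sum>k\<in>KK M. a M k * g M k is) = (\<Sum>l<N. B M l * g M (y l) is))"
    by (rule choice)
  then obtain B where "\<forall>M. \<exists>y. (\<forall>l<N. B M l \<ge> 0 \<and> y l \<in> KK M) \<and>
       (\<forall>is\<in>I. (\<Sum>k\<in>KK M. a M k * g M k is) = (\<Sum>l<N. B M l * g M (y l) is))" by blast
  hence "\<exists>Y. \<forall>M. (\<forall>l<N. B M l \<ge> 0 \<and> Y M l \<in> KK M) \<and>
       (\<forall>is\<in>I. (\<Sum>k\<in>KK M. a M k * g M k is) = (\<Sum>l<N. B M l * g M (Y M l) is))"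
    by (rule choice)
  then obtain Y where BY: "\<forall>M. (\<forall>l<N. B M l \<ge> 0 \<and> Y M l \<in> KK M) \<and>
       (\<forall>is\<in>I. (\<Sum>k\<in>KK M. a M k * g M k is) = (\<Sum>l<N. B M l * g M (Y M l) is))" by blast
  define Z where "Z M l = exp (- real (Y M l) * h M)" for M l
  have B0: "B M l \<ge> 0" if "l < N" for M l using BY that by auto
  have Z01: "0 \<le> Z M l \<and> Z M l \<le> 1" for M l by (simp add: Z_def h_def)
  have conv2: "(\<lambda>M. \<Sum>l<N. B M l * T (Z M l) is) \<longlonglongrightarrow> 1 / S is" if "is \<in> I" for "is"
    using conv[OF that] BY that by (simp add: g_def Z_def)
  have T0: "T z is0 = 1" for z by (simp add: T_def S0 F_def)
  have convB: "(\<lambda>M. \<Sum>l<N. B M l) \<longlonglongrightarrow> 1 / S is0" using conv2[OF is0I] by (simp add: T0)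
  then obtain Kb where Kb: "\<forall>M. norm (\<Sum>l<N. B M l) \<le> Kb"
    using convergent_imp_Bseq[OF convergentI[OF convB]] unfolding Bseq_def by blast
  have Bbd: "\<bar>B M l\<bar> \<le> Kb" if "l < N" for M l
  proof -
    have "B M l \<le> (\<Sum>l<N. B M l)" using that B0 by (intro member_le_sum) auto
    thus ?thesis using Kb[rule_format, of M] B0[OF that, of M] by simp
  qed
  define f where "f M l = (if l < N then B M l else Z M (l - N))" for M l
  have "\<forall>l<2*N. Bseq (\<lambda>M. f M l)"
  proof (intro allI impI)
    fix l assume "l < 2*N"
    show "Bseq (\<lambda>M. f M l)"
    proof (cases "l < N")
      case True thus ?thesis using Bbd[OF True] unfolding Bseq_def f_def
        by (intro exI[of _ "max Kb 1"]) (auto simp: le_max_iff_disj)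
    next
      case False thus ?thesis using Z01 unfolding Bseq_def f_def
        by (intro exI[of _ 1]) auto
    qed
  qed
  from subseq_all[OF this] obtain r where r: "strict_mono r" "\<forall>l<2*N. convergent (\<lambda>M. f (r M) l)"
    by blast
  define wl where "wl l = lim (\<lambda>M. B (r M) l)" for l
  define zl where "zl l = lim (\<lambda>M. Z (r M) l)" for l
  have wl: "(\<lambda>M. B (r M) l) \<longlonglongrightarrow> wl l" if "l < N" for l
    using r(2)[rule_format, of l] that unfolding wl_def f_def by (simp add: convergent_LIMSEQ_iff)
  have zl: "(\<lambda>M. Z (r M) l) \<longlonglongrightarrow> zl l" if "l < N" for l
    using r(2)[rule_format, of "l + N"] that unfolding zl_def f_def by (simp add: convergent_LIMSEQ_iff)
  have wl0: "wl l \<ge> 0" if "l < N" for l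
    using wl[OF that] B0[OF that] by (intro LIMSEQ_le_const) auto
  have key: "1 / S is = (\<Sum>l<N. wl l * T (zl l) is)" if "is \<in> I" for "is"
  proof -
    have "(\<lambda>M. \<Sum>l<N. B (r M) l * T (Z (r M) l) is) \<longlonglongrightarrow> 1 / S is"
      using LIMSEQ_subseq_LIMSEQ[OF conv2[OF that] r(1)] by (simp add: o_def)
    moreover have "(\<lambda>M. \<Sum>l<N. B (r M) l * T (Z (r M) l) is) \<longlonglongrightarrow> (\<Sum>l<N. wl l * T (zl l) is)"
      unfolding T_def using Z01 Sge[OF that]
      by (intro tendsto_sum tendsto_mult wl F_cont zl) auto
    ultimately show ?thesis using LIMSEQ_unique by blast
  qed
  define u where "u l i = root m (wl l) * F (zl l) (c i - cmin)" for l i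
  show ?thesis unfolding completely_positive_def
  proof (intro exI[of _ N] exI[of _ u] conjI ballI allI impI)
    fix l i assume "l < N" "i < n"
    thus "u l i \<ge> 0" unfolding u_def by (intro mult_nonneg_nonneg real_root_ge_zero F_nonneg wl0)
  next
    fix "is" assume isI: "is \<in> idx n m"
    hence isI': "is \<in> I" by (simp add: I_def)
    have len: "length is = m" using isI by (simp add: idx_def)
    have "(\<Sum>l<N. prod_list (map (u l) is)) = (\<Sum>l<N. wl l * T (zl l) is)"
    proof (intro sum.cong refl)
      fix l assume l: "l \<in> {..<N}"
      have "prod_list (map (u l) is) = root m (wl l) ^ m * prod_list (map (\<lambda>i. F (zl l) (c i - cmin)) is)"
        unfolding u_def prod_scale len ..
      also have "root m (wl l) ^ m = wl l" using m wl0 l by (intro real_root_pow_pos2) auto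
      also have "prod_list (map (\<lambda>i. F (zl l) (c i - cmin)) is) = T (zl l) is"
        unfolding T_def Sdiff[OF isI'] using isI cmin_le by (intro F_prod) (auto simp: idx_def)
      finally show "prod_list (map (u l) is) = wl l * T (zl l) is" .
    qed
    also have "\<dots> = 1 / S is" using key[OF isI'] by simp
    finally show "cauchy_tensor c is = (\<Sum>l<N. prod_list (map (u l) is))"
      by (simp add: cauchy_tensor_def S_def)
  qed
qed
theorem mainTheorem17:
  fixes n m :: nat and c :: "nat \<Rightarrow> real"
  assumes "m \<ge> 2" and "n \<ge> 1" and "cauchy_gen_ok n m c"
  shows "(completely_positive n m (cauchy_tensor c) \<longleftrightarrow> strictly_copositive n m (cauchy_tensor c))
       \<and> (strictly_copositive n m (cauchy_tensor c) \<longleftrightarrow> (\<forall>i<n. c i > 0))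
       \<and> ((\<forall>i<n. c i > 0) \<longleftrightarrow> strictly_increasing_on_nonneg n m (cauchy_tensor c))
       \<and> (strictly_increasing_on_nonneg n m (cauchy_tensor c) \<longleftrightarrow> doubly_nonnegative n m (cauchy_tensor c))"
proof -
  have m: "m \<ge> 1" using assms(1) by simp
  note ok = assms(3)
  have CP: "completely_positive n m (cauchy_tensor c) \<longleftrightarrow> (\<forall>i<n. c i > 0)"
    using cp_pos[OF ok m] pos_cp[OF _ assms(2) m] by blast
  have SC: "strictly_copositive n m (cauchy_tensor c) \<longleftrightarrow> (\<forall>i<n. c i > 0)"
    using sc_pos[OF ok m] pos_sc[OF _ m] by blast
  have SI: "strictly_increasing_on_nonneg n m (cauchy_tensor c) \<longleftrightarrow> (\<forall>i<n. c i > 0)"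
    using si_pos[OF ok m] pos_si[OF _ m] by blast
  have DN: "doubly_nonnegative n m (cauchy_tensor c) \<longleftrightarrow> (\<forall>i<n. c i > 0)"
  proof
    assume "doubly_nonnegative n m (cauchy_tensor c)"
    thus "\<forall>i<n. c i > 0" using dnn_pos[OF ok m] by blast
  next
    assume pos: "\<forall>i<n. c i > 0"
    have "\<forall>is\<in>idx n m. cauchy_tensor c is \<ge> 0"
      using entry_pos[OF pos m] by (auto intro: less_imp_le)
    moreover have "\<forall>lam. H_eigenvalue n m (cauchy_tensor c) lam \<longrightarrow> lam \<ge> 0"
      using cp_heig[OF pos_cp[OF pos assms(2) m] m] by blast
    ultimately show "doubly_nonnegative n m (cauchy_tensor c)"
      unfolding doubly_nonnegative_def by blast
  qed
  show ?thesis using CP SC SI DN by blast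
qed
end
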